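(* Let $\pi:(X,T)\to(Y,S)$ be a proximal extension of minimal topological dynamical systems. If $(Y,S)$ is not strongly $\mathcal{F}_t$-sensitive, then neither is $(X,T)$.
   Context: A topological dynamical system: compact metric space with continuous surjection; minimal means every orbit is dense. A proximal extension is a factor map $\pi$ ($\pi\circ T=S\circ\pi$, continuous surjective) such that every pair $(x,y)$ with $\pi(x)=\pi(y)$ is proximal, i.e. $\inf_n d(T^nx,T^ny)=0$. A set $F\subset\mathbb{Z}_+$ is thick if it contains arbitrarily long blocks of consecutive integers. A system $(X,T)$ is strongly $\mathcal{F}_t$-sensitive if there is $\delta>0$ such that for each nonempty open $U$ there are $x,y\in U$ with $\{n\in\mathbb{Z}_+:d(T^nx,T^ny)>\delta\}$ thick. *)

theory Defs
  imports "HOL-Analysis.Analysis"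
begin

definition tds :: "'a::metric_space set \<Rightarrow> ('a \<Rightarrow> 'a) \<Rightarrow> bool" where
  "tds X T \<longleftrightarrow> compact X \<and> X \<noteq> {} \<and> continuous_on X T \<and> T ` X = X"

definition minimal_sys :: "'a::metric_space set \<Rightarrow> ('a \<Rightarrow> 'a) \<Rightarrow> bool" where
  "minimal_sys X T \<longleftrightarrow> tds X T \<and> (\<forall>x\<in>X. closure {(T ^^ n) x | n. True} = X)"

definition factor_map :: "'a::metric_space set \<Rightarrow> ('a \<Rightarrow> 'a) \<Rightarrow> 'b::metric_space set \<Rightarrow> ('b \<Rightarrow> 'b) \<Rightarrow> ('a \<Rightarrow> 'b) \<Rightarrow> bool" where
  "factor_map X T Y S p \<longleftrightarrow> continuous_on X p \<and> p ` X = Y \<and> (\<forall>x\<in>X. p (T x) = S (p x))"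

definition proximal :: "('a \<Rightarrow> 'a) \<Rightarrow> 'a::metric_space \<Rightarrow> 'a \<Rightarrow> bool" where
  "proximal T x y \<longleftrightarrow> (INF n. dist ((T ^^ n) x) ((T ^^ n) y)) = 0"

definition proximal_extension :: "'a::metric_space set \<Rightarrow> ('a \<Rightarrow> 'a) \<Rightarrow> 'b::metric_space set \<Rightarrow> ('b \<Rightarrow> 'b) \<Rightarrow> ('a \<Rightarrow> 'b) \<Rightarrow> bool" where
  "proximal_extension X T Y S p \<longleftrightarrow> factor_map X T Y S p \<and>
     (\<forall>x\<in>X. \<forall>y\<in>X. p x = p y \<longrightarrow> proximal T x y)"

definition thick :: "nat set \<Rightarrow> bool" where
  "thick F \<longleftrightarrow> (\<forall>k. \<exists>m. {m..<m+k} \<subseteq> F)"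

definition strongly_Ft_sensitive :: "'a::metric_space set \<Rightarrow> ('a \<Rightarrow> 'a) \<Rightarrow> bool" where
  "strongly_Ft_sensitive X T \<longleftrightarrow> (\<exists>\<delta>>0. \<forall>U. openin (top_of_set X) U \<and> U \<noteq> {} \<longrightarrow>
     (\<exists>x\<in>U. \<exists>y\<in>U. thick {n. dist ((T ^^ n) x) ((T ^^ n) y) > \<delta>}))"

end

theory Submission
  imports Defs
begin

lemma funpow_in:
  assumes "T ` X = X" "x \<in> X" shows "(T ^^ n) x \<in> X"
  using assms by (induction n) auto

lemma funpow_cont:
  assumes "T ` X = X" "continuous_on X T" shows "continuous_on X (T ^^ n)"
proof (induction n)
  case 0 then show ?case by (simp add: continuous_on_id)
next
  case (Suc n)
  have "continuous_on X (T \<circ> (T ^^ n))"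
    apply (rule continuous_on_compose[OF Suc])
    apply (rule continuous_on_subset[OF assms(2)])
    using funpow_in[OF assms(1)] by auto
  then show ?case by simp
qed

lemma funpow_factor:
  assumes "factor_map X T Y S p" "T ` X = X" "x \<in> X"
  shows "(S ^^ n) (p x) = p ((T ^^ n) x)"
proof (induction n)
  case 0 then show ?case by simp
next
  case (Suc n)
  have "(T ^^ n) x \<in> X" using funpow_in assms by metis
  then show ?case using Suc assms(1) unfolding factor_map_def by simp
qed

lemma prox_uniform:
  assumes "tds X T" "proximal_extension X T Y S p" "\<delta> > 0"
  shows "\<exists>N. \<exists>\<epsilon>>0. \<forall>a\<in>X. \<forall>b\<in>X. dist (p a) (p b) \<le> \<epsilon> \<longrightarrow>
           (\<exists>j\<le>N. dist ((T ^^ j) a) ((T ^^ j) b) < \<delta>)"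
proof (rule ccontr)
  assume neg: "\<not> ?thesis"
  have "\<forall>k. \<exists>q. fst q \<in> X \<and> snd q \<in> X \<and> dist (p (fst q)) (p (snd q)) \<le> 1 / real (Suc k) \<and>
           (\<forall>j\<le>k. dist ((T ^^ j) (fst q)) ((T ^^ j) (snd q)) \<ge> \<delta>)"
  proof
    fix k
    have pos: "1 / real (Suc k) > 0" by simp
    from neg have "\<forall>N \<epsilon>. \<epsilon> > 0 \<longrightarrow> (\<exists>a\<in>X. \<exists>b\<in>X. dist (p a) (p b) \<le> \<epsilon> \<and>
           (\<forall>j\<le>N. \<not> dist ((T ^^ j) a) ((T ^^ j) b) < \<delta>))" by blast
    then obtain a b where "a \<in> X" "b \<in> X" "dist (p a) (p b) \<le> 1 / real (Suc k)"
        "\<forall>j\<le>k. \<not> dist ((T ^^ j) a) ((T ^^ j) b) < \<delta>"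
      using pos by blast
    then show "\<exists>q. fst q \<in> X \<and> snd q \<in> X \<and> dist (p (fst q)) (p (snd q)) \<le> 1 / real (Suc k) \<and>
           (\<forall>j\<le>k. dist ((T ^^ j) (fst q)) ((T ^^ j) (snd q)) \<ge> \<delta>)"
      by (intro exI[of _ "(a,b)"]) (simp add: not_less)
  qed
  then obtain q where q: "\<forall>k. fst (q k) \<in> X \<and> snd (q k) \<in> X \<and> dist (p (fst (q k))) (p (snd (q k))) \<le> 1 / real (Suc k) \<and>
           (\<forall>j\<le>k. dist ((T ^^ j) (fst (q k))) ((T ^^ j) (snd (q k))) \<ge> \<delta>)"
    by (rule choice[THEN exE]) blast
  define a where "a k = fst (q k)" for k
  define b where "b k = snd (q k)" for k
  have ab: "\<And>k. a k \<in> X" "\<And>k. b k \<in> X"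
    "\<And>k. dist (p (a k)) (p (b k)) \<le> 1 / real (Suc k)"
    "\<And>k j. j \<le> k \<Longrightarrow> dist ((T ^^ j) (a k)) ((T ^^ j) (b k)) \<ge> \<delta>"
    using q unfolding a_def b_def by auto
  have TX: "T ` X = X" "continuous_on X T" "compact X" using assms(1) unfolding tds_def by auto
  have pc: "continuous_on X p" using assms(2) unfolding proximal_extension_def factor_map_def by auto
  have cXX: "compact (X \<times> X)" using TX(3) by (simp add: compact_Times)
  have allin: "\<forall>k. (\<lambda>k. (a k, b k)) k \<in> X \<times> X" using ab by auto
  obtain l r where l: "l \<in> X \<times> X" and r: "strict_mono r"
     and lim: "((\<lambda>k. (a k, b k)) \<circ> r) \<longlonglongrightarrow> l"
    by (rule seq_compactE[OF compact_imp_seq_compact[OF cXX] allin])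
  obtain u v where uv: "l = (u, v)" by fastforce
  have u: "u \<in> X" and v: "v \<in> X" using l uv by auto
  have la: "(\<lambda>k. a (r k)) \<longlonglongrightarrow> u" using tendsto_fst[OF lim] uv by (simp add: o_def)
  have lb: "(\<lambda>k. b (r k)) \<longlonglongrightarrow> v" using tendsto_snd[OF lim] uv by (simp add: o_def)
  have cont: "\<And>f c s. continuous_on X f \<Longrightarrow> s \<longlonglongrightarrow> c \<Longrightarrow> c \<in> X \<Longrightarrow> (\<And>k. s k \<in> X) \<Longrightarrow>
      (\<lambda>k. f (s k)) \<longlonglongrightarrow> f c"
    by (rule continuous_on_tendsto_compose) auto
  have puv: "p u = p v"
  proof -
    have d: "(\<lambda>k. dist (p (a (r k))) (p (b (r k)))) \<longlonglongrightarrow> dist (p u) (p v)"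
      by (intro tendsto_dist cont[OF pc] la lb u v ab)
    have z: "(\<lambda>k. 1 / real (Suc (r k))) \<longlonglongrightarrow> 0"
    proof -
      have "(\<lambda>k. 1 / real (Suc k)) \<longlonglongrightarrow> (0::real)"
        using LIMSEQ_Suc[OF lim_inverse_n'] by (simp add: o_def)
      then show ?thesis using LIMSEQ_subseq_LIMSEQ[OF _ r] by (simp add: o_def)
    qed
    have "dist (p u) (p v) \<le> 0"
      by (rule tendsto_le[OF _ z d]) (use ab(3) in auto)
    then show ?thesis by simp
  qed
  have ge: "dist ((T ^^ j) u) ((T ^^ j) v) \<ge> \<delta>" for j
  proof -
    have d: "(\<lambda>k. dist ((T ^^ j) (a (r k))) ((T ^^ j) (b (r k)))) \<longlonglongrightarrow> dist ((T ^^ j) u) ((T ^^ j) v)"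
      by (intro tendsto_dist cont[OF funpow_cont[OF TX(1,2)]] la lb u v ab)
    have ev: "eventually (\<lambda>k. dist ((T ^^ j) (a (r k))) ((T ^^ j) (b (r k))) \<ge> \<delta>) sequentially"
    proof (rule eventually_sequentiallyI[of j])
      fix k assume "j \<le> k"
      then have "j \<le> r k" using seq_suble[OF r, of k] by linarith
      then show "dist ((T ^^ j) (a (r k))) ((T ^^ j) (b (r k))) \<ge> \<delta>" by (rule ab(4))
    qed
    show ?thesis by (rule tendsto_lowerbound[OF d ev]) simp
  qed
  have "proximal T u v" using assms(2) u v puv unfolding proximal_extension_def by auto
  then have "(INF n. dist ((T ^^ n) u) ((T ^^ n) v)) = 0" unfolding proximal_def .
  moreover have "(INF n. dist ((T ^^ n) u) ((T ^^ n) v)) \<ge> \<delta>"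
    by (rule cINF_greatest) (auto intro: ge)
  ultimately show False using assms(3) by simp
qed

theorem proposition5p1:
  fixes X :: "'a::metric_space set" and T :: "'a \<Rightarrow> 'a"
    and Y :: "'b::metric_space set" and S :: "'b \<Rightarrow> 'b" and p :: "'a \<Rightarrow> 'b"
  assumes "minimal_sys X T" and "minimal_sys Y S"
    and "proximal_extension X T Y S p"
    and "\<not> strongly_Ft_sensitive Y S"
  shows "\<not> strongly_Ft_sensitive X T"
proof
  assume "strongly_Ft_sensitive X T"
  then obtain \<delta> where dpos: "\<delta> > 0" and sens: "\<And>U. openin (top_of_set X) U \<Longrightarrow> U \<noteq> {} \<Longrightarrow>
     (\<exists>x\<in>U. \<exists>y\<in>U. thick {n. dist ((T ^^ n) x) ((T ^^ n) y) > \<delta>})"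
    unfolding strongly_Ft_sensitive_def by blast
  have tX: "tds X T" using assms(1) unfolding minimal_sys_def by auto
  have TX: "T ` X = X" using tX unfolding tds_def by auto
  have fm: "factor_map X T Y S p" using assms(3) unfolding proximal_extension_def by auto
  obtain N \<epsilon> where ep: "\<epsilon> > 0" and unif: "\<And>a b. a \<in> X \<Longrightarrow> b \<in> X \<Longrightarrow> dist (p a) (p b) \<le> \<epsilon> \<Longrightarrow>
           (\<exists>j\<le>N. dist ((T ^^ j) a) ((T ^^ j) b) < \<delta>)"
    using prox_uniform[OF tX assms(3) dpos] by blast
  have "strongly_Ft_sensitive Y S"
    unfolding strongly_Ft_sensitive_def
  proof (intro exI[of _ \<epsilon>] conjI allI impI ep, elim conjE)
    fix V assume V: "openin (top_of_set Y) V" "V \<noteq> {}"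
    have pc: "continuous_on X p" "p ` X = Y" using fm unfolding factor_map_def by auto
    have U: "openin (top_of_set X) (X \<inter> p -` V)"
      by (rule continuous_openin_preimage[OF pc(1) _ V(1)]) (use pc(2) in auto)
    obtain v where vV: "v \<in> V" using V(2) by blast
    then have "v \<in> Y" using openin_subset[OF V(1)] by auto
    then obtain x0 where "x0 \<in> X" "p x0 = v" using pc(2) by (metis imageE)
    then have ne: "X \<inter> p -` V \<noteq> {}" using vV by auto
    obtain x y where x: "x \<in> X \<inter> p -` V" and y: "y \<in> X \<inter> p -` V"
      and th: "thick {n. dist ((T ^^ n) x) ((T ^^ n) y) > \<delta>}"
      using sens[OF U ne] by blast
    have xy: "x \<in> X" "p x \<in> V" "y \<in> X" "p y \<in> V" using x y by auto
    have "thick {n. dist ((S ^^ n) (p x)) ((S ^^ n) (p y)) > \<epsilon>}"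
      unfolding thick_def
    proof
      fix k
      obtain m where m: "{m..<m + (k + N)} \<subseteq> {n. dist ((T ^^ n) x) ((T ^^ n) y) > \<delta>}"
        using th unfolding thick_def by blast
      have "{m..<m+k} \<subseteq> {n. dist ((S ^^ n) (p x)) ((S ^^ n) (p y)) > \<epsilon>}"
      proof
        fix n assume n: "n \<in> {m..<m+k}"
        show "n \<in> {n. dist ((S ^^ n) (p x)) ((S ^^ n) (p y)) > \<epsilon>}"
        proof (rule ccontr)
          assume "n \<notin> {n. dist ((S ^^ n) (p x)) ((S ^^ n) (p y)) > \<epsilon>}"
          then have "dist (p ((T ^^ n) x)) (p ((T ^^ n) y)) \<le> \<epsilon>"
            using funpow_factor[OF fm TX] xy by (simp add: not_less)
          then obtain j where j: "j \<le> N" "dist ((T ^^ j) ((T ^^ n) x)) ((T ^^ j) ((T ^^ n) y)) < \<delta>"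
            using unif funpow_in[OF TX] xy by blast
          have "j + n \<in> {m..<m + (k + N)}" using n j by auto
          then have "dist ((T ^^ (j+n)) x) ((T ^^ (j+n)) y) > \<delta>" using m by blast
          then show False using j by (simp add: funpow_add)
        qed
      qed
      then show "\<exists>m. {m..<m+k} \<subseteq> {n. dist ((S ^^ n) (p x)) ((S ^^ n) (p y)) > \<epsilon>}" by blast
    qed
    then show "\<exists>x\<in>V. \<exists>y\<in>V. thick {n. dist ((S ^^ n) x) ((S ^^ n) y) > \<epsilon>}"
      using xy by blast
  qed
  then show False using assms(4) by blast
qed

end
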